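(* Let $N$ be a finite nonempty set, $p\notin N$ and $N'=N\cup\{p\}$. Let $\mathscr{C}=\{S_1,\dots,S_k\}$ be a minimal balanced collection on $N$ with (unique) balancing weights $(\lambda_{S_i})_{i\in[k]}$. Let $I\subseteq[k]$ and $\delta\in[k]\setminus I$ satisfy $1>\lambda_I>1-\lambda_{S_\delta}$, where $\lambda_I=\sum_{i\in I}\lambda_{S_i}$. Then $$\mathscr{C}'=\{S_i\cup\{p\}\mid i\in I\}\cup\{S_i\mid i\in[k]\setminus I\}\cup\{S_\delta\cup\{p\}\}$$ is a minimal balanced collection on $N'$ (with balancing weights $\lambda_{S_i}$ for the sets coming from $S_i$, $i\neq\delta$, weight $1-\lambda_I$ for $S_\delta\cup\{p\}$ and weight $\lambda_{S_\delta}-(1-\lambda_I)$ for $S_\delta$).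
   Context: For $T\subseteq N$, $\mathbf{1}^T\in\mathbb{R}^N$ denotes the characteristic vector of $T$. A collection $\mathscr{B}$ of nonempty subsets of a finite set $N$ is balanced if there exist positive weights $(\lambda_S)_{S\in\mathscr{B}}$ (balancing weights) with $\sum_{S\in\mathscr{B}}\lambda_S\mathbf{1}^S=\mathbf{1}^N$. A balanced collection is minimal if it contains no balanced proper subcollection; equivalently, its system of balancing weights is unique. $[k]=\{1,\dots,k\}$. *)

theory Defs
  imports Complex_Main
begin

definition balancing_weights :: "'a set \<Rightarrow> 'a set set \<Rightarrow> ('a set \<Rightarrow> real) \<Rightarrow> bool" where
  "balancing_weights N B w \<longleftrightarrow>
     (\<forall>S\<in>B. S \<noteq> {} \<and> S \<subseteq> N) \<and> finite B \<and>
     (\<forall>S\<in>B. w S > 0) \<and>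
     (\<forall>i\<in>N. (\<Sum>S\<in>{S\<in>B. i \<in> S}. w S) = 1)"

definition balanced :: "'a set \<Rightarrow> 'a set set \<Rightarrow> bool" where
  "balanced N B \<longleftrightarrow> (\<exists>w. balancing_weights N B w)"

definition minimal_balanced :: "'a set \<Rightarrow> 'a set set \<Rightarrow> bool" where
  "minimal_balanced N B \<longleftrightarrow> balanced N B \<and> (\<forall>B'. B' \<subset> B \<longrightarrow> \<not> balanced N B')"

end

theory Submission
  imports Defs
begin

lemma restrict_pos:
  fixes v :: "'a set \<Rightarrow> real"
  assumes "\<forall>S\<in>B. S \<noteq> {} \<and> S \<subseteq> N" "finite B" "\<forall>S\<in>B. v S \<ge> 0"
    "\<forall>i\<in>N. (\<Sum>S\<in>{S\<in>B. i\<in>S}. v S) = 1"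
  shows "balancing_weights N {S\<in>B. v S > 0} v"
proof -
  have "(\<Sum>S\<in>{S\<in>{S\<in>B. v S>0}. i\<in>S}. v S) = (\<Sum>S\<in>{S\<in>B. i\<in>S}. v S)" for i
    by (rule sum.mono_neutral_left) (use assms in \<open>auto simp: less_le\<close>)
  then show ?thesis using assms unfolding balancing_weights_def by auto
qed

lemma min_eq:
  fixes v :: "'a set \<Rightarrow> real"
  assumes "minimal_balanced N B" "\<forall>S\<in>B. v S \<ge> 0"
    "\<forall>i\<in>N. (\<Sum>S\<in>{S\<in>B. i\<in>S}. v S) = 1"
  shows "{S\<in>B. v S > 0} = B"
proof -
  obtain w where w: "balancing_weights N B w" using assms(1) unfolding minimal_balanced_def balanced_def by auto
  have "balancing_weights N {S\<in>B. v S > 0} v"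
    by (rule restrict_pos) (use w assms in \<open>auto simp: balancing_weights_def\<close>)
  then have "\<not> {S\<in>B. v S > 0} \<subset> B" using assms(1) unfolding minimal_balanced_def balanced_def by blast
  then show ?thesis by blast
qed

lemma le_lemma:
  assumes mb: "minimal_balanced N B" and w: "balancing_weights N B w" and v: "balancing_weights N B v"
  shows "\<forall>S\<in>B. w S \<le> v S"
proof (rule ccontr)
  assume neg: "\<not> (\<forall>S\<in>B. w S \<le> v S)"
  define X where "X = {S\<in>B. v S < w S}"
  have fin: "finite X" using w unfolding X_def balancing_weights_def by auto
  have ne: "X \<noteq> {}" using neg unfolding X_def by force
  define t where "t = Min ((\<lambda>S. w S / (w S - v S)) ` X)"
  have "t \<in> (\<lambda>S. w S / (w S - v S)) ` X"
    unfolding t_def using fin ne by (intro Min_in) auto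
  then obtain S0 where S0: "S0 \<in> X" "t = w S0/(w S0 - v S0)" by auto
  have tle: "t \<le> w S/(w S - v S)" if "S \<in> X" for S
    unfolding t_def using fin that by (intro Min_le) auto
  have wpos: "\<forall>S\<in>B. w S > 0" and vpos: "\<forall>S\<in>B. v S > 0"
    using w v unfolding balancing_weights_def by auto
  have tpos: "t > 0" using S0 wpos unfolding X_def by auto
  define u where "u S = (1-t) * w S + t * v S" for S
  have u0: "u S \<ge> 0" if "S \<in> B" for S
  proof (cases "S \<in> X")
    case True
    then have d: "w S - v S > 0" unfolding X_def by auto
    have "t * (w S - v S) \<le> w S" using tle[OF True] d by (simp add: le_divide_eq)
    then show ?thesis unfolding u_def by (simp add: algebra_simps)
  next
    case False
    then have "v S \<ge> w S" using that unfolding X_def by auto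
    then have "t * (v S - w S) \<ge> 0" using tpos by simp
    moreover have "w S > 0" using wpos that by auto
    ultimately show ?thesis unfolding u_def by (simp add: algebra_simps)
  qed
  have uS0: "u S0 = 0"
  proof -
    have d: "w S0 - v S0 > 0" using S0 unfolding X_def by auto
    then have "t * (w S0 - v S0) = w S0" using S0 by simp
    then show ?thesis unfolding u_def by (simp add: algebra_simps)
  qed
  have usum: "\<forall>i\<in>N. (\<Sum>S\<in>{S\<in>B. i\<in>S}. u S) = 1"
  proof
    fix i assume i: "i \<in> N"
    have "(\<Sum>S\<in>{S\<in>B. i\<in>S}. u S) = (1-t) * (\<Sum>S\<in>{S\<in>B. i\<in>S}. w S) + t * (\<Sum>S\<in>{S\<in>B. i\<in>S}. v S)"
      unfolding u_def by (simp add: sum.distrib sum_distrib_left)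
    also have "\<dots> = 1" using w v i unfolding balancing_weights_def by auto
    finally show "(\<Sum>S\<in>{S\<in>B. i\<in>S}. u S) = 1" .
  qed
  have "{S\<in>B. u S > 0} = B" using min_eq[OF mb] u0 usum by auto
  moreover have "S0 \<in> B" using S0 unfolding X_def by auto
  ultimately have "S0 \<in> {S\<in>B. u S > 0}" by simp
  then show False using uS0 by simp
qed

lemma uniq:
  fixes v :: "'a set \<Rightarrow> real"
  assumes mb: "minimal_balanced N B" and w: "balancing_weights N B w"
    and "\<forall>S\<in>B. v S \<ge> 0" "\<forall>i\<in>N. (\<Sum>S\<in>{S\<in>B. i\<in>S}. v S) = 1"
  shows "\<forall>S\<in>B. v S = w S"
proof -
  have "{S\<in>B. v S > 0} = B" using min_eq[OF mb] assms by auto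
  then have v: "balancing_weights N B v" using w assms unfolding balancing_weights_def by auto
  show ?thesis using le_lemma[OF mb w v] le_lemma[OF mb v w] by force
qed

theorem lemma4p3:
  fixes N :: "'a set" and p :: 'a and k :: nat and S :: "nat \<Rightarrow> 'a set"
    and lam :: "'a set \<Rightarrow> real" and I :: "nat set" and \<delta> :: nat
  assumes "finite N" and "N \<noteq> {}" and "p \<notin> N"
    and "inj_on S {1..k}"
    and "minimal_balanced N (S ` {1..k})"
    and "balancing_weights N (S ` {1..k}) lam"
    and "I \<subseteq> {1..k}" and "\<delta> \<in> {1..k} - I"
    and "(\<Sum>i\<in>I. lam (S i)) < 1"
    and "(\<Sum>i\<in>I. lam (S i)) > 1 - lam (S \<delta>)"
  shows "minimal_balanced (insert p N)
           ((\<lambda>i. insert p (S i)) ` I \<union> S ` ({1..k} - I) \<union> {insert p (S \<delta>)})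
       \<and> balancing_weights (insert p N)
           ((\<lambda>i. insert p (S i)) ` I \<union> S ` ({1..k} - I) \<union> {insert p (S \<delta>)})
           (\<lambda>T. if T = insert p (S \<delta>) then 1 - (\<Sum>i\<in>I. lam (S i))
                 else if T = S \<delta> then lam (S \<delta>) - (1 - (\<Sum>i\<in>I. lam (S i)))
                 else if p \<in> T then lam (T - {p})
                 else lam T)"
proof -
  let ?K = "{1..k}"
  define L where "L = (\<Sum>i\<in>I. lam (S i))"
  define C' where "C' = ((\<lambda>i. insert p (S i)) ` I \<union> S ` (?K - I) \<union> {insert p (S \<delta>)})"
  define w' where "w' = (\<lambda>T. if T = insert p (S \<delta>) then 1 - L
                 else if T = S \<delta> then lam (S \<delta>) - (1 - L)
                 else if p \<in> T then lam (T - {p}) else lam T)"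
  have bw: "\<forall>S'\<in>S`?K. S' \<noteq> {} \<and> S' \<subseteq> N" "\<forall>S'\<in>S`?K. lam S' > 0"
    "\<forall>j\<in>N. (\<Sum>S'\<in>{S'\<in>S`?K. j\<in>S'}. lam S') = 1"
    using assms(6) unfolding balancing_weights_def by auto
  have SN: "S i \<subseteq> N" "S i \<noteq> {}" "p \<notin> S i" "lam (S i) > 0" if "i\<in>?K" for i
    using bw that assms(3) by auto
  have pnot: "False" if "p \<in> S j" "j \<in> ?K" for j using SN(3) that by blast
  have dK: "\<delta> \<in> ?K" "\<delta> \<notin> I" using assms(8) by auto
  have IK: "I \<subseteq> ?K" and finI: "finite I" using assms(7) finite_subset by auto
  have injS: "i = j" if "S i = S j" "i\<in>?K" "j\<in>?K" for i j
    using assms(4) that inj_on_def by metis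
  have injP: "i = j" if "insert p (S i) = insert p (S j)" "i\<in>?K" "j\<in>?K" for i j
    using that injS SN insert_ident by metis
  have w_I: "w' (insert p (S i)) = lam (S i)" if "i\<in>I" for i
  proof -
    have i: "i \<in> ?K" "i \<noteq> \<delta>" using that IK dK by auto
    have "insert p (S i) \<noteq> insert p (S \<delta>)" using injP i dK by metis
    moreover have "insert p (S i) \<noteq> S \<delta>" using SN(3)[OF dK(1)] by blast
    moreover have "insert p (S i) - {p} = S i" using SN i by auto
    ultimately show ?thesis unfolding w'_def by simp
  qed
  have w_R: "w' (S i) = lam (S i)" if "i\<in>?K" "i \<noteq> \<delta>" for i
  proof -
    have "S i \<noteq> insert p (S \<delta>)" using SN(3)[OF that(1)] by blast
    moreover have "S i \<noteq> S \<delta>" using injS that dK by metis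
    ultimately show ?thesis unfolding w'_def using SN that by simp
  qed
  have w_P: "w' (insert p (S \<delta>)) = 1 - L" unfolding w'_def by simp
  have w_D: "w' (S \<delta>) = lam (S \<delta>) - (1 - L)"
  proof -
    have "S \<delta> \<noteq> insert p (S \<delta>)" using SN(3)[OF dK(1)] by blast
    then show ?thesis unfolding w'_def by simp
  qed
  have decomp: "(\<Sum>T\<in>C'. g T) = (\<Sum>i\<in>I. g (insert p (S i))) + (\<Sum>i\<in>?K-I. g (S i)) + g (insert p (S \<delta>))"
    for g :: "'a set \<Rightarrow> real"
  proof -
    have d1: "(\<lambda>i. insert p (S i)) ` I \<inter> S ` (?K - I) = {}" using pnot by blast
    have d2: "((\<lambda>i. insert p (S i)) ` I \<union> S ` (?K - I)) \<inter> {insert p (S \<delta>)} = {}"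
    proof -
      have "insert p (S \<delta>) \<notin> (\<lambda>i. insert p (S i)) ` I" using injP dK IK by blast
      moreover have "insert p (S \<delta>) \<notin> S ` (?K - I)" using pnot by blast
      ultimately show ?thesis by auto
    qed
    have inj1: "inj_on (\<lambda>i. insert p (S i)) I" using injP IK unfolding inj_on_def by blast
    have inj2: "inj_on S (?K - I)" using assms(4) by (rule inj_on_subset) auto
    have "(\<Sum>T\<in>C'. g T) = (\<Sum>T\<in>(\<lambda>i. insert p (S i)) ` I \<union> S ` (?K - I). g T) + g (insert p (S \<delta>))"
      unfolding C'_def using d2 finI by (subst sum.union_disjoint) auto
    also have "(\<Sum>T\<in>(\<lambda>i. insert p (S i)) ` I \<union> S ` (?K - I). g T)
       = (\<Sum>T\<in>(\<lambda>i. insert p (S i)) ` I. g T) + (\<Sum>T\<in>S ` (?K - I). g T)"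
      using d1 finI by (subst sum.union_disjoint) auto
    also have "(\<Sum>T\<in>(\<lambda>i. insert p (S i)) ` I. g T) = (\<Sum>i\<in>I. g (insert p (S i)))"
      using inj1 by (simp add: sum.reindex)
    also have "(\<Sum>T\<in>S ` (?K - I). g T) = (\<Sum>i\<in>?K-I. g (S i))"
      using inj2 by (simp add: sum.reindex)
    finally show ?thesis .
  qed
  have splitD: "(\<Sum>i\<in>?K-I. g i) = (\<Sum>i\<in>?K-I-{\<delta>}. g i) + g \<delta>" for g :: "nat \<Rightarrow> real"
    using dK by (subst sum.remove[of _ \<delta>]) auto
  have splitK: "(\<Sum>i\<in>?K. g i) = (\<Sum>i\<in>I. g i) + (\<Sum>i\<in>?K-I. g i)" for g :: "nat \<Rightarrow> real"
    using IK by (subst sum.subset_diff[of I]) auto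
  have reidx: "(\<Sum>S'\<in>{S'\<in>S`?K. j\<in>S'}. f S') = (\<Sum>i\<in>?K. if j \<in> S i then f (S i) else 0)"
    for j and f :: "'a set \<Rightarrow> real"
    using assms(4) by (simp add: sum.inter_filter sum.reindex)
  have orig: "(\<Sum>i\<in>?K. if j\<in>S i then lam (S i) else 0) = 1" if "j \<in> N" for j
    using bw(3) that reidx by metis
  have Lpos: "1 - L > 0" "lam (S \<delta>) - (1 - L) > 0" using assms(9,10) unfolding L_def by auto
  have finC: "finite C'" unfolding C'_def using finI by simp
  have filt: "(\<Sum>T\<in>{T\<in>C'. j\<in>T}. f T) = (\<Sum>T\<in>C'. if j \<in> T then f T else 0)"
    for j and f :: "'a set \<Rightarrow> real"
    using finC by (simp add: sum.inter_filter)
  have BW: "balancing_weights (insert p N) C' w'"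
    unfolding balancing_weights_def
  proof (intro conjI)
    have SNb: "\<forall>i\<in>?K. S i \<subseteq> N \<and> S i \<noteq> {}" using SN by blast
    show "\<forall>T\<in>C'. T \<noteq> {} \<and> T \<subseteq> insert p N" using SNb dK IK unfolding C'_def by blast
    show "finite C'" by (rule finC)
    show "\<forall>T\<in>C'. w' T > 0"
    proof
      fix T assume "T \<in> C'"
      then consider (a) i where "i \<in> I" "T = insert p (S i)" | (b) i where "i \<in> ?K - I" "T = S i"
        | (c) "T = insert p (S \<delta>)" unfolding C'_def by blast
      then show "w' T > 0"
      proof cases
        case a then show ?thesis using w_I SN IK by auto
      next
        case b then show ?thesis using w_R w_D SN Lpos by (cases "i = \<delta>") auto
      next
        case c then show ?thesis using w_P Lpos by auto
      qed
    qed
    show "\<forall>j\<in>insert p N. (\<Sum>T\<in>{T\<in>C'. j\<in>T}. w' T) = 1"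
    proof
      fix j assume j: "j \<in> insert p N"
      show "(\<Sum>T\<in>{T\<in>C'. j\<in>T}. w' T) = 1"
      proof (cases "j = p")
        case True
        have "(\<Sum>T\<in>{T\<in>C'. j\<in>T}. w' T) = (\<Sum>i\<in>I. w' (insert p (S i))) + (\<Sum>i\<in>?K-I. 0) + w' (insert p (S \<delta>))"
          unfolding filt decomp using True SN by (intro arg_cong2[where f="(+)"] sum.cong) auto
        also have "\<dots> = L + (1 - L)" using w_I w_P unfolding L_def by simp
        finally show ?thesis by simp
      next
        case False
        then have jN: "j \<in> N" using j by auto
        have "(\<Sum>T\<in>{T\<in>C'. j\<in>T}. w' T) = (\<Sum>i\<in>I. if j \<in> S i then lam (S i) else 0)
            + ((\<Sum>i\<in>?K-I-{\<delta>}. if j \<in> S i then lam (S i) else 0) + (if j \<in> S \<delta> then lam (S \<delta>) - (1 - L) else 0))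
            + (if j \<in> S \<delta> then 1 - L else 0)"
          unfolding filt decomp splitD using False w_I w_R w_D w_P dK
          by (intro arg_cong2[where f="(+)"] sum.cong) auto
        also have "\<dots> = (\<Sum>i\<in>I. if j \<in> S i then lam (S i) else 0)
            + ((\<Sum>i\<in>?K-I-{\<delta>}. if j \<in> S i then lam (S i) else 0) + (if j \<in> S \<delta> then lam (S \<delta>) else 0))"
          by simp
        also have "\<dots> = (\<Sum>i\<in>?K. if j\<in>S i then lam (S i) else 0)"
          unfolding splitK splitD[where g="\<lambda>i. if j\<in>S i then lam (S i) else 0"] by simp
        also have "\<dots> = 1" using orig jN by simp
        finally show ?thesis .
      qed
    qed
  qed
  have MB: "minimal_balanced (insert p N) C'"
    unfolding minimal_balanced_def balanced_def
  proof (intro conjI allI impI)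
    show "\<exists>w. balancing_weights (insert p N) C' w" using BW by blast
    fix B' assume sub: "B' \<subset> C'"
    show "\<not> (\<exists>w. balancing_weights (insert p N) B' w)"
    proof
      assume "\<exists>w. balancing_weights (insert p N) B' w"
      then obtain \<mu> where mu: "balancing_weights (insert p N) B' \<mu>" by blast
      define m where "m T = (if T \<in> B' then \<mu> T else 0)" for T
      have m0: "m T \<ge> 0" for T using mu unfolding m_def balancing_weights_def by (auto simp: less_imp_le)
      have mpos: "T \<in> B'" if "m T > 0" for T using that unfolding m_def by (auto split: if_splits)
      have finB: "finite B'" using finC sub finite_subset by auto
      have msum: "(\<Sum>T\<in>C'. if j\<in>T then m T else 0) = 1" if "j \<in> insert p N" for j
      proof -
        have "(\<Sum>T\<in>C'. if j\<in>T then m T else 0) = (\<Sum>T\<in>B'. if j\<in>T then m T else 0)"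
          using finC sub by (intro sum.mono_neutral_right) (auto simp: m_def)
        also have "\<dots> = (\<Sum>T\<in>B'. if j\<in>T then \<mu> T else 0)"
          by (rule sum.cong) (auto simp: m_def)
        also have "\<dots> = (\<Sum>T\<in>{T\<in>B'. j\<in>T}. \<mu> T)" using finB by (simp add: sum.inter_filter)
        also have "\<dots> = 1" using mu that unfolding balancing_weights_def by auto
        finally show ?thesis .
      qed
      define v where "v S' = (if S' = S \<delta> then m (S \<delta>) + m (insert p (S \<delta>))
         else if S' \<in> S ` I then m (insert p S') else m S')" for S'
      have v_I: "v (S i) = m (insert p (S i))" if "i \<in> I" for i
      proof -
        have "S i \<noteq> S \<delta>" using injS[of i \<delta>] that IK dK by blast
        then show ?thesis unfolding v_def using that by auto
      qed
      have v_R: "v (S i) = m (S i)" if "i \<in> ?K" "i \<notin> I" "i \<noteq> \<delta>" for i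
      proof -
        have "S i \<noteq> S \<delta>" using injS that dK by metis
        moreover have "S i \<notin> S ` I" using injS that IK by blast
        ultimately show ?thesis unfolding v_def by auto
      qed
      have v_D: "v (S \<delta>) = m (S \<delta>) + m (insert p (S \<delta>))" unfolding v_def by simp
      have v0: "\<forall>S'\<in>S`?K. v S' \<ge> 0" unfolding v_def using m0 by (auto simp: add_nonneg_nonneg)
      have vsum: "\<forall>j\<in>N. (\<Sum>S'\<in>{S'\<in>S`?K. j\<in>S'}. v S') = 1"
      proof
        fix j assume jN: "j \<in> N"
        then have jp: "j \<noteq> p" using assms(3) by auto
        have "(\<Sum>S'\<in>{S'\<in>S`?K. j\<in>S'}. v S') = (\<Sum>i\<in>?K. if j \<in> S i then v (S i) else 0)"
          by (rule reidx)
        also have "\<dots> = (\<Sum>i\<in>I. if j \<in> S i then v (S i) else 0)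
           + ((\<Sum>i\<in>?K-I-{\<delta>}. if j \<in> S i then v (S i) else 0) + (if j \<in> S \<delta> then v (S \<delta>) else 0))"
          unfolding splitK splitD[where g="\<lambda>i. if j\<in>S i then v (S i) else 0"] by simp
        also have "\<dots> = (\<Sum>i\<in>I. if j \<in> insert p (S i) then m (insert p (S i)) else 0)
           + ((\<Sum>i\<in>?K-I-{\<delta>}. if j \<in> S i then m (S i) else 0) + (if j \<in> S \<delta> then m (S \<delta>) else 0))
           + (if j \<in> insert p (S \<delta>) then m (insert p (S \<delta>)) else 0)"
        proof -
          have e1: "(\<Sum>i\<in>I. if j \<in> S i then v (S i) else 0) = (\<Sum>i\<in>I. if j \<in> insert p (S i) then m (insert p (S i)) else 0)"
            using jp v_I by (intro sum.cong) auto
          have e2: "(\<Sum>i\<in>?K-I-{\<delta>}. if j \<in> S i then v (S i) else 0) = (\<Sum>i\<in>?K-I-{\<delta>}. if j \<in> S i then m (S i) else 0)"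
            by (rule sum.cong) (use v_R in auto)
          show ?thesis unfolding e1 e2 using jp v_D by auto
        qed
        also have "\<dots> = (\<Sum>T\<in>C'. if j\<in>T then m T else 0)"
          unfolding decomp splitD[where g="\<lambda>i. if j\<in>S i then m (S i) else 0"] by simp
        also have "\<dots> = 1" using msum jN by simp
        finally show "(\<Sum>S'\<in>{S'\<in>S`?K. j\<in>S'}. v S') = 1" .
      qed
      have veq: "\<forall>S'\<in>S`?K. v S' = lam S'"
        by (rule uniq[OF assms(5) assms(6) v0 vsum])
      have mI: "m (insert p (S i)) = lam (S i)" if "i \<in> I" for i
        using veq v_I that IK by force
      have mR: "m (S i) = lam (S i)" if "i \<in> ?K" "i \<notin> I" "i \<noteq> \<delta>" for i
        using veq v_R that by force
      have "(\<Sum>T\<in>C'. if p\<in>T then m T else 0) = 1" using msum by simp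
      moreover have "(\<Sum>T\<in>C'. if p\<in>T then m T else 0) = (\<Sum>i\<in>I. m (insert p (S i))) + (\<Sum>i\<in>?K-I. 0) + m (insert p (S \<delta>))"
        unfolding decomp using SN by (intro arg_cong2[where f="(+)"] sum.cong) auto
      moreover have "(\<Sum>i\<in>I. m (insert p (S i))) = L" unfolding L_def using mI by simp
      ultimately have mP: "m (insert p (S \<delta>)) = 1 - L" by simp
      have mD: "m (S \<delta>) = lam (S \<delta>) - (1 - L)" using veq v_D mP dK by force
      have "C' \<subseteq> B'"
      proof
        fix T assume "T \<in> C'"
        then consider (a) i where "i \<in> I" "T = insert p (S i)" | (b) i where "i \<in> ?K - I" "i \<noteq> \<delta>" "T = S i"
          | (d) "T = S \<delta>" | (c) "T = insert p (S \<delta>)" unfolding C'_def by blast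
        then show "T \<in> B'"
        proof cases
          case a then show ?thesis using mI SN IK mpos by force
        next
          case b then show ?thesis using mR SN mpos by force
        next
          case d then show ?thesis using mD Lpos mpos by force
        next
          case c then show ?thesis using mP Lpos mpos by force
        qed
      qed
      then show False using sub by blast
    qed
  qed
  show ?thesis using MB BW unfolding C'_def w'_def L_def by simp
qed

end
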